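(* Consider the FlexPD-G iterates described in the context with $\alpha,\beta>0$ and integer $T\ge1$, and let $c_1=1+\alpha\rho(B)$. Then for any $\bar p,\bar q>1$ and every $k\ge0$, \[\|x^{k+1,T-1}-x^*\|^2+\frac{\alpha}{\beta}\|\lambda^k-\lambda^*\|^2+\alpha\rho(B)\|x^k-x^*\|^2\le\Gamma_G^{T-1}\Big(c_1\|x^k-x^*\|^2+\frac{\alpha}{\beta}\|\lambda^k-\lambda^*\|^2\Big),\] where \[\Gamma_G=\max\Big\{\bar p(1+\alpha L)^2,\;1+\frac{\bar p\bar q\alpha\beta\rho(AA')}{\bar p-1},\;1+\frac{\bar p\bar q\alpha\rho(B)}{(\bar p-1)(\bar q-1)}\Big\}.\]
   Context: Setting: $n$ agents are connected by a connected undirected graph with edge set $\mathcal E$, $\epsilon=|\mathcal E|$. For $x\in\mathbb R^n$ let $f(x)=\sum_{i=1}^n f_i(x_i)$, where each $f_i:\mathbb R\to\mathbb R$ is twice differentiable with $m\le f_i''\le L$ for constants $0<m\le L$; $\nabla f(x)=(f_1'(x_1),\dots,f_n'(x_n))'$. $A\in\mathbb R^{\epsilon\times n}$ is the edge–node incidence matrix (null space spanned by the all-ones vector). $B\in\mathbb R^{n\times n}$ is symmetric positive semidefinite with the same null space as $A$, off-diagonal entries nonzero only on edges, and $\rho(B)<m$. $x^*$ is the unique minimizer of $f$ subject to $Ax=0$ and $\lambda^*$ a Lagrange multiplier with $\nabla f(x^* )+A'\lambda^*=0$, $Ax^*=0$, $Bx^*=0$, chosen in the column space of $A$. FlexPD-G: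 given $\alpha,\beta>0$, $T\ge1$, $x^0$ arbitrary, $\lambda^0=0$; for $k\ge0$: $x^{k+1,0}=x^k$; for $t=1,\dots,T$, $x^{k+1,t}=x^{k+1,t-1}-\alpha\nabla f(x^{k+1,t-1})-\alpha A'\lambda^k-\alpha Bx^k$; then $x^{k+1}=x^{k+1,T}$, $\lambda^{k+1}=\lambda^k+\beta Ax^{k+1}$. Notation: $\rho(S)$ largest eigenvalue of a symmetric matrix $S$; $\|\cdot\|$ Euclidean norm. *)

theory Defs
  imports "HOL-Analysis.Analysis"
begin

definition rho :: "real^'k^'k \<Rightarrow> real" where
  "rho S = Max {\<mu>. \<exists>v. v \<noteq> 0 \<and> S *v v = \<mu> *\<^sub>R v}"

text \<open>Edges of an undirected graph on node type 'n, indexed by edge type 'e;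
  each edge is given with an (arbitrary) orientation ends e = (tail, head).\<close>
definition adjacent :: "('e \<Rightarrow> 'n \<times> 'n) \<Rightarrow> 'n \<Rightarrow> 'n \<Rightarrow> bool" where
  "adjacent ends u v \<longleftrightarrow> (\<exists>e. ends e = (u, v) \<or> ends e = (v, u))"

definition simple_connected_graph :: "('e::finite \<Rightarrow> 'n::finite \<times> 'n) \<Rightarrow> bool" where
  "simple_connected_graph ends \<longleftrightarrow>
     (\<forall>e. fst (ends e) \<noteq> snd (ends e)) \<and>
     (\<forall>e e'. e \<noteq> e' \<longrightarrow> ends e' \<noteq> ends e \<and> ends e' \<noteq> prod.swap (ends e)) \<and>
     (\<forall>u v. (u, v) \<in> {(a, b). adjacent ends a b}\<^sup>*)"

definition incidence :: "('e \<Rightarrow> 'n \<times> 'n) \<Rightarrow> real^'n^'e" where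
  "incidence ends = (\<chi> e i. if i = fst (ends e) then 1 else if i = snd (ends e) then -1 else 0)"

end

theory Submission imports Defs begin
lemma transpose_dot: "(transpose S *v u) \<bullet> w = u \<bullet> ((S::real^'a^'b) *v w)"
  by (simp add: dot_lmul_matrix)

lemma sym_dot: assumes "transpose S = S" shows "(S *v u) \<bullet> w = u \<bullet> ((S::real^'a^'a) *v w)"
  by (metis assms transpose_dot)

lemma lin_quad_zero:
  fixes a b :: real assumes "\<And>t. a*t + b*t^2 \<le> 0" shows "a = 0"
proof (rule ccontr)
  assume a: "a \<noteq> 0"
  define t where "t = a / (\<bar>b\<bar>+1)"
  have "a*t + b*t^2 \<ge> a^2/(\<bar>b\<bar>+1) - \<bar>b\<bar> * a^2/(\<bar>b\<bar>+1)^2"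
  proof -
    have "b*t^2 \<ge> -\<bar>b\<bar>*t^2" using mult_right_mono[of "-\<bar>b\<bar>" b "t^2"] by simp
    then show ?thesis unfolding t_def by (simp add: power2_eq_square power_divide)
  qed
  moreover have "a^2/(\<bar>b\<bar>+1) - \<bar>b\<bar> * a^2/(\<bar>b\<bar>+1)^2 = a^2/(\<bar>b\<bar>+1)^2"
  proof -
    have "\<And>c::real. c > 0 \<Longrightarrow> a^2/c - (c-1)*a^2/c^2 = a^2/c^2" by (simp add: field_simps power2_eq_square)
    from this[of "\<bar>b\<bar>+1"] show ?thesis by simp
  qed
  moreover have "a^2/(\<bar>b\<bar>+1)^2 > 0" using a by simp
  ultimately show False using assms[of t] by linarith
qed

lemma eig_finite:
  fixes S :: "real^'k^'k" assumes sym: "transpose S = S"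
  shows "finite {\<mu>. \<exists>v. v \<noteq> 0 \<and> S *v v = \<mu> *\<^sub>R v}" (is "finite ?E")
proof -
  define ev where "ev \<mu> = (SOME v. v \<noteq> 0 \<and> S *v v = \<mu> *\<^sub>R v)" for \<mu>
  have ev: "ev \<mu> \<noteq> 0 \<and> S *v ev \<mu> = \<mu> *\<^sub>R ev \<mu>" if "\<mu> \<in> ?E" for \<mu>
    using that unfolding ev_def by (metis (mono_tags, lifting) mem_Collect_eq someI_ex)
  have inj: "inj_on ev ?E"
  proof (rule inj_onI)
    fix \<mu> \<nu> assume m: "\<mu> \<in> ?E" and n: "\<nu> \<in> ?E" and eq: "ev \<mu> = ev \<nu>"
    have h1: "S *v ev \<mu> = \<mu> *\<^sub>R ev \<mu>" "ev \<mu> \<noteq> 0" using ev[OF m] by auto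
    have h2: "S *v ev \<mu> = \<nu> *\<^sub>R ev \<mu>" using ev[OF n] eq by simp
    have "\<mu> *\<^sub>R ev \<mu> = \<nu> *\<^sub>R ev \<mu>" using h1 h2 by simp
    then show "\<mu> = \<nu>" using h1(2) by simp
  qed
  have po: "pairwise orthogonal (ev ` ?E)"
    unfolding pairwise_def orthogonal_def
  proof (intro ballI impI)
    fix a b assume "a \<in> ev ` ?E" "b \<in> ev ` ?E" "a \<noteq> b"
    then obtain \<mu> \<nu> where m: "\<mu> \<in> ?E" and n: "\<nu> \<in> ?E" and ab: "a = ev \<mu>" "b = ev \<nu>"
      and ne: "ev \<mu> \<noteq> ev \<nu>" by blast
    then have "\<mu> \<noteq> \<nu>" by auto
    have "(S *v ev \<mu>) \<bullet> ev \<nu> = ev \<mu> \<bullet> (S *v ev \<nu>)" by (rule sym_dot[OF sym])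
    then have "\<mu> * (ev \<mu> \<bullet> ev \<nu>) = \<nu> * (ev \<mu> \<bullet> ev \<nu>)" using ev[OF m] ev[OF n] by simp
    then have "(\<mu> - \<nu>) * (ev \<mu> \<bullet> ev \<nu>) = 0" by (simp only: left_diff_distrib)
    with \<open>\<mu> \<noteq> \<nu>\<close> show "a \<bullet> b = 0" unfolding ab by simp
  qed
  have "0 \<notin> ev ` ?E"
  proof
    assume "0 \<in> ev ` ?E"
    then obtain \<mu> where z: "0 = ev \<mu>" and mE: "\<mu> \<in> ?E" by (rule imageE)
    have "ev \<mu> \<noteq> 0" using ev[OF mE] by (rule conjunct1)
    then show False using z by simp
  qed
  then have "independent (ev ` ?E)" using po pairwise_orthogonal_independent by blast
  then have "finite (ev ` ?E)" by (rule independent_imp_finite)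
  then show ?thesis using inj finite_imageD by blast
qed

lemma rayleigh:
  fixes S :: "real^'k^'k" assumes sym: "transpose S = S"
  shows "v \<bullet> (S *v v) \<le> rho S * (norm v)^2"
proof -
  let ?f = "\<lambda>y. y \<bullet> (S *v y)"
  have cont: "continuous_on (sphere 0 1) ?f"
    by (intro continuous_intros continuous_on_compose2[of UNIV "(*v) S"] linear_continuous_on) 
       (auto simp: matrix_vector_mul_linear)
  have ne: "sphere (0::real^'k) 1 \<noteq> {}" by (simp add: sphere_def) (metis norm_Basis SOME_Basis)
  obtain u where u: "u \<in> sphere 0 1" and umax: "\<And>y. y \<in> sphere 0 1 \<Longrightarrow> ?f y \<le> ?f u"
    using continuous_attains_sup[OF compact_sphere ne cont] by blast
  define \<mu> where "\<mu> = ?f u"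
  have nu: "norm u = 1" using u by simp
  have bound: "?f y \<le> \<mu> * (norm y)^2" for y
  proof (cases "y = 0")
    case False
    let ?y = "(1/norm y) *\<^sub>R y"
    have "?y \<in> sphere 0 1" using False by simp
    then have A: "?f ?y \<le> \<mu>" using umax \<mu>_def by blast
    have B: "?f ?y = ?f y / (norm y)^2"
      by (simp add: matrix_vector_mult_scaleR power2_eq_square)
    have "?f y / (norm y)^2 \<le> \<mu>" using A B by linarith
    then show ?thesis using False by (simp add: divide_le_eq mult.commute)
  qed simp
  have eig: "S *v u = \<mu> *\<^sub>R u"
  proof -
    define w where "w = S *v u - \<mu> *\<^sub>R u"
    have "(2 * (w \<bullet> (S *v u) - \<mu> * (w \<bullet> u))) * t + (?f w - \<mu> * (norm w)^2) * t^2 \<le> 0" for t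
    proof -
      have b: "?f (u + t *\<^sub>R w) \<le> \<mu> * (norm (u + t *\<^sub>R w))^2" by (rule bound)
      have e1: "?f (u + t *\<^sub>R w) = ?f u + 2 * t * (w \<bullet> (S *v u)) + t^2 * ?f w"
        using sym_dot[OF sym, of w u]
        by (simp add: matrix_vector_right_distrib matrix_vector_mult_scaleR algebra_simps inner_commute power2_eq_square)
      have e2: "(norm (u + t *\<^sub>R w))^2 = 1 + 2 * t * (w \<bullet> u) + t^2 * (norm w)^2"
      proof -
        have uu: "u \<bullet> u = 1" using nu by (simp add: norm_eq_1)
        show ?thesis unfolding power2_norm_eq_inner
          by (simp add: inner_add_left inner_add_right inner_commute algebra_simps uu power2_eq_square)
      qed
      have "\<mu> + 2 * t * (w \<bullet> (S *v u)) + t^2 * ?f w \<le> \<mu> * (1 + 2 * t * (w \<bullet> u) + t^2 * (norm w)^2)"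
        using b unfolding e1 e2 \<mu>_def[symmetric] .
      then show ?thesis by (simp add: algebra_simps)
    qed
    then have "2 * (w \<bullet> (S *v u) - \<mu> * (w \<bullet> u)) = 0" by (rule lin_quad_zero)
    then have "w \<bullet> w = 0" unfolding w_def by (simp add: algebra_simps)
    then show ?thesis unfolding w_def by simp
  qed
  have "u \<noteq> 0" using nu by auto
  then have "\<mu> \<in> {\<mu>. \<exists>v. v \<noteq> 0 \<and> S *v v = \<mu> *\<^sub>R v}" using eig by blast
  then have "\<mu> \<le> rho S" unfolding rho_def using eig_finite[OF sym] by simp
  then show ?thesis using bound[of v] by (meson mult_right_mono order_trans zero_le_power2)
qed


lemma norm_sq_vec: "(norm (v::real^'n))\<^sup>2 = (\<Sum>i\<in>UNIV. (v $ i)\<^sup>2)"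
  unfolding power2_norm_eq_inner by (simp add: inner_vec_def power2_eq_square)

lemma rho_nonneg:
  fixes S :: "real^'k^'k" assumes sym: "transpose S = S" and psd: "\<And>v. 0 \<le> v \<bullet> (S *v v)"
  shows "0 \<le> rho S"
proof -
  obtain v :: "real^'k" where v: "v \<in> Basis" by (meson SOME_Basis)
  then have "norm v = 1" by simp
  then show ?thesis using rayleigh[OF sym, of v] psd[of v] by simp
qed

lemma psd_cs:
  fixes S :: "real^'k^'k" assumes sym: "transpose S = S" and psd: "\<And>v. 0 \<le> v \<bullet> (S *v v)"
  shows "(u \<bullet> (S *v v))^2 \<le> (u \<bullet> (S *v u)) * (v \<bullet> (S *v v))"
proof -
  define a where "a = u \<bullet> (S *v u)"
  define b where "b = u \<bullet> (S *v v)"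
  define c where "c = v \<bullet> (S *v v)"
  have key: "0 \<le> a - 2 * t * b + t^2 * c" for t
  proof -
    have "0 \<le> (u - t *\<^sub>R v) \<bullet> (S *v (u - t *\<^sub>R v))" by (rule psd)
    also have "\<dots> = a - 2 * t * b + t^2 * c"
      using sym_dot[OF sym, of v u]
      by (simp add: a_def b_def c_def matrix_vector_mult_diff_distrib matrix_vector_mult_scaleR
          inner_diff_left inner_diff_right inner_commute algebra_simps power2_eq_square)
    finally show ?thesis .
  qed
  have "c \<ge> 0" unfolding c_def by (rule psd)
  show ?thesis
  proof (cases "c = 0")
    case True
    have "b = 0"
    proof (rule ccontr)
      assume "b \<noteq> 0"
      have "0 \<le> a - 2 * ((a+1)/(2*b)) * b" using key[of "(a+1)/(2*b)"] True by simp
      then show False using \<open>b \<noteq> 0\<close> by simp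
    qed
    then show ?thesis using True by (simp add: b_def c_def[symmetric])
  next
    case False
    then have cp: "c > 0" using \<open>c \<ge> 0\<close> by simp
    have "0 \<le> a - 2 * (b/c) * b + (b/c)^2 * c" by (rule key)
    also have "\<dots> = a - b^2 / c" using cp by (simp add: field_simps power2_eq_square)
    finally have "b^2 \<le> a * c" using cp by (simp add: field_simps)
    then show ?thesis by (simp add: a_def b_def c_def)
  qed
qed

lemma psd_sq_bound:
  fixes S :: "real^'k^'k" assumes sym: "transpose S = S" and psd: "\<And>v. 0 \<le> v \<bullet> (S *v v)"
  shows "(norm (S *v v))^2 \<le> (rho S)^2 * (norm v)^2"
proof -
  define u where "u = S *v v"
  have r0: "0 \<le> rho S" by (rule rho_nonneg[OF sym psd])
  have cs: "(u \<bullet> u)^2 \<le> (u \<bullet> (S *v u)) * (v \<bullet> (S *v v))"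
    using psd_cs[OF sym psd, of u v] by (simp add: u_def)
  have r1: "u \<bullet> (S *v u) \<le> rho S * (u \<bullet> u)" using rayleigh[OF sym, of u] by (simp add: power2_norm_eq_inner)
  have r2: "v \<bullet> (S *v v) \<le> rho S * (v \<bullet> v)" using rayleigh[OF sym, of v] by (simp add: power2_norm_eq_inner)
  have uu: "u \<bullet> u \<le> rho S * (v \<bullet> (S *v v))"
  proof (cases "u \<bullet> u = 0")
    case True then show ?thesis using r0 psd[of v] by simp
  next
    case False
    then have up: "u \<bullet> u > 0" by (simp add: order_le_neq_trans)
    have "(u \<bullet> u) * (u \<bullet> u) \<le> (rho S * (u \<bullet> u)) * (v \<bullet> (S *v v))"
      using cs r1 psd[of v] by (simp add: power2_eq_square) (meson mult_right_mono order_trans)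
    then have "(u \<bullet> u) * (u \<bullet> u) \<le> (u \<bullet> u) * (rho S * (v \<bullet> (S *v v)))" by (simp add: ac_simps)
    then show ?thesis using up by simp
  qed
  also have "\<dots> \<le> rho S * (rho S * (v \<bullet> v))" using r2 r0 by (simp add: mult_left_mono)
  finally show ?thesis by (simp only: u_def power2_norm_eq_inner) (simp add: power2_eq_square mult.assoc)
qed

lemma lip_deriv:
  fixes g g' :: "real \<Rightarrow> real"
  assumes d: "\<And>t. (g has_real_derivative g' t) (at t)" and b: "\<And>t. \<bar>g' t\<bar> \<le> L"
  shows "\<bar>g a - g b\<bar> \<le> L * \<bar>a - b\<bar>"
proof -
  have *: "\<bar>g y - g x\<bar> \<le> L * \<bar>y - x\<bar>" if xy: "x < y" for x y
  proof -
    obtain z where "g y - g x = (y - x) * g' z" using MVT2[OF xy, of g g'] d by blast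
    then have "\<bar>g y - g x\<bar> = \<bar>y - x\<bar> * \<bar>g' z\<bar>" by (simp add: abs_mult)
    also have "\<dots> \<le> \<bar>y - x\<bar> * L" using b by (simp add: mult_left_mono)
    finally show ?thesis by (simp add: mult.commute)
  qed
  show ?thesis
  proof (cases a b rule: linorder_cases)
    case less then show ?thesis using *[OF less] by (simp add: abs_minus_commute)
  next
    case equal then show ?thesis by simp
  next
    case greater then show ?thesis using *[OF greater] by simp
  qed
qed

lemma young_sq:
  fixes x y :: "'a::real_inner" and p :: real assumes p: "p > 1"
  shows "(norm (x + y))^2 \<le> p * (norm x)^2 + p / (p - 1) * (norm y)^2"
proof -
  define r where "r = p - 1"
  have r: "r > 0" using p r_def by simp
  have "(norm (x + y))^2 \<le> (norm x + norm y)^2"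
    by (simp add: norm_triangle_ineq power_mono)
  also have "\<dots> = (norm x)^2 + 2 * norm x * norm y + (norm y)^2" by (simp add: power2_eq_square algebra_simps)
  also have "2 * norm x * norm y \<le> r * (norm x)^2 + (norm y)^2 / r"
  proof -
    have "0 \<le> (r * norm x - norm y)^2 / r" using r by simp
    also have "\<dots> = r * (norm x)^2 + (norm y)^2 / r - 2 * norm x * norm y"
      using r by (simp add: field_simps power2_eq_square)
    finally show ?thesis by simp
  qed
  then have "(norm x)^2 + 2 * norm x * norm y + (norm y)^2 \<le> (norm x)^2 + (r * (norm x)^2 + (norm y)^2 / r) + (norm y)^2"
    by simp
  also have "\<dots> = p * (norm x)^2 + p / (p - 1) * (norm y)^2"
    using r by (simp add: r_def field_simps)
  finally show ?thesis .
qed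

lemma three_sq:
  fixes a b c :: "'a::real_inner" and p q :: real assumes p: "p > 1" and q: "q > 1"
  shows "(norm (a + b + c))^2 \<le> p * (norm a)^2 + p * q / (p - 1) * (norm b)^2
            + p * q / ((p - 1) * (q - 1)) * (norm c)^2"
proof -
  have "(norm (a + (b + c)))^2 \<le> p * (norm a)^2 + p / (p - 1) * (norm (b + c))^2" by (rule young_sq[OF p])
  also have "\<dots> \<le> p * (norm a)^2 + p / (p - 1) * (q * (norm b)^2 + q / (q - 1) * (norm c)^2)"
    using mult_left_mono[OF young_sq[OF q, of b c], of "p / (p - 1)"] p by simp
  also have "\<dots> = p * (norm a)^2 + p * q / (p - 1) * (norm b)^2
            + p * q / ((p - 1) * (q - 1)) * (norm c)^2"
  proof -
    have e1: "p*q/(p-1) = p/(p-1)*q" by simp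
    have e2: "p*q/((p-1)*(q-1)) = p/(p-1)*(q/(q-1))" by simp
    show ?thesis by (simp only: e1 e2 distrib_left mult.assoc)
  qed
  finally show ?thesis by (simp add: add.assoc)
qed

theorem lemma3p9:
  fixes ends :: "'e::finite \<Rightarrow> 'n::finite \<times> 'n"
    and A :: "real^'n^'e" and B :: "real^'n^'n"
    and fs fd fdd :: "'n \<Rightarrow> real \<Rightarrow> real"
    and m L \<alpha> \<beta> pb qb :: real and T :: nat
    and xs :: "real^'n" and ls :: "real^'e"
    and x :: "nat \<Rightarrow> real^'n" and xin :: "nat \<Rightarrow> nat \<Rightarrow> real^'n"
    and lam :: "nat \<Rightarrow> real^'e"
    and k :: nat
  defines "F \<equiv> \<lambda>y::real^'n. \<Sum>i\<in>UNIV. fs i (y $ i)"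
    and "grad \<equiv> \<lambda>y::real^'n. \<chi> i. fd i (y $ i)"
  assumes graph: "simple_connected_graph ends"
    and A_def: "A = incidence ends"
    and f_d1: "\<And>i t. (fs i has_real_derivative fd i t) (at t)"
    and f_d2: "\<And>i t. (fd i has_real_derivative fdd i t) (at t)"
    and m_pos: "0 < m" and m_le: "\<And>i t. m \<le> fdd i t" and L_ge: "\<And>i t. fdd i t \<le> L"
    and B_sym: "transpose B = B"
    and B_psd: "\<And>v. 0 \<le> v \<bullet> (B *v v)"
    and B_null: "{v. B *v v = 0} = {v. A *v v = 0}"
    and B_sparse: "\<And>i j. i \<noteq> j \<Longrightarrow> B $ i $ j \<noteq> 0 \<Longrightarrow> adjacent ends i j"
    and B_rho: "rho B < m"
    and xs_feas: "A *v xs = 0"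
    and xs_min: "\<And>y. A *v y = 0 \<Longrightarrow> F xs \<le> F y"
    and xs_uniq: "\<And>y. A *v y = 0 \<Longrightarrow> F y \<le> F xs \<Longrightarrow> y = xs"
    and ls_KKT: "grad xs + transpose A *v ls = 0"
    and xs_B: "B *v xs = 0"
    and ls_col: "ls \<in> range (\<lambda>y. A *v y)"
    and \<alpha>_pos: "0 < \<alpha>" and \<beta>_pos: "0 < \<beta>" and T_ge: "1 \<le> T"
    and lam0: "lam 0 = 0"
    and inner0: "\<And>j. xin j 0 = x j"
    and inner_step: "\<And>j t. t < T \<Longrightarrow> xin j (Suc t) = xin j t - \<alpha> *\<^sub>R grad (xin j t)
                        - \<alpha> *\<^sub>R (transpose A *v lam j) - \<alpha> *\<^sub>R (B *v x j)"
    and x_step: "\<And>j. x (Suc j) = xin j T"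
    and lam_step: "\<And>j. lam (Suc j) = lam j + \<beta> *\<^sub>R (A *v x (Suc j))"
    and pb_gt: "pb > 1" and qb_gt: "qb > 1"
  shows "let c1 = 1 + \<alpha> * rho B;
             \<Gamma> = Max {pb * (1 + \<alpha> * L)\<^sup>2,
                      1 + pb * qb * \<alpha> * \<beta> * rho (A ** transpose A) / (pb - 1),
                      1 + pb * qb * \<alpha> * rho B / ((pb - 1) * (qb - 1))}
         in (norm (xin k (T - 1) - xs))\<^sup>2 + \<alpha> / \<beta> * (norm (lam k - ls))\<^sup>2
              + \<alpha> * rho B * (norm (x k - xs))\<^sup>2
            \<le> \<Gamma> ^ (T - 1) * (c1 * (norm (x k - xs))\<^sup>2 + \<alpha> / \<beta> * (norm (lam k - ls))\<^sup>2)"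
proof -
  define \<rho>B where "\<rho>B = rho B"
  define \<rho>A where "\<rho>A = rho (A ** transpose A)"
  define c1 where "c1 = 1 + \<alpha> * \<rho>B"
  define G where "G = Max {pb * (1 + \<alpha> * L)\<^sup>2,
                      1 + pb * qb * \<alpha> * \<beta> * \<rho>A / (pb - 1),
                      1 + pb * qb * \<alpha> * \<rho>B / ((pb - 1) * (qb - 1))}"
  define d where "d = x k - xs"
  define \<Lambda> where "\<Lambda> = lam k - ls"
  define e where "e t = xin k t - xs" for t
  define V where "V t = (norm (e t))\<^sup>2 + \<alpha> / \<beta> * (norm \<Lambda>)\<^sup>2 + \<alpha> * \<rho>B * (norm d)\<^sup>2" for t
  have G1: "pb * (1 + \<alpha> * L)\<^sup>2 \<le> G" unfolding G_def by (rule Max_ge) auto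
  have G2: "1 + pb * qb * \<alpha> * \<beta> * \<rho>A / (pb - 1) \<le> G" unfolding G_def by (rule Max_ge) auto
  have G3: "1 + pb * qb * \<alpha> * \<rho>B / ((pb - 1) * (qb - 1)) \<le> G" unfolding G_def by (rule Max_ge) auto
  have rB0: "0 \<le> \<rho>B" unfolding \<rho>B_def by (rule rho_nonneg[OF B_sym B_psd])
  have L0: "0 \<le> L" using m_le[of undefined 0] L_ge[of undefined 0] m_pos by linarith
  have "0 \<le> pb * (1 + \<alpha> * L)\<^sup>2" using pb_gt by simp
  then have G0: "0 \<le> G" using G1 by linarith
  have Abound: "(norm (transpose A *v w))\<^sup>2 \<le> \<rho>A * (norm w)\<^sup>2" for w
  proof -
    have sym: "transpose (A ** transpose A) = A ** transpose A" by (simp add: matrix_transpose_mul)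
    have "(norm (transpose A *v w))\<^sup>2 = (transpose A *v w) \<bullet> (transpose A *v w)"
      by (rule power2_norm_eq_inner)
    also have "\<dots> = w \<bullet> (A *v (transpose A *v w))" by (rule transpose_dot)
    also have "\<dots> = w \<bullet> ((A ** transpose A) *v w)" by (simp only: matrix_vector_mul_assoc)
    also have "\<dots> \<le> \<rho>A * (norm w)\<^sup>2" unfolding \<rho>A_def by (rule rayleigh[OF sym])
    finally show ?thesis .
  qed
  have Bbound: "(norm (B *v v))\<^sup>2 \<le> \<rho>B\<^sup>2 * (norm v)\<^sup>2" for v
    unfolding \<rho>B_def by (rule psd_sq_bound[OF B_sym B_psd])
  have gbound: "(norm (y - xs - \<alpha> *\<^sub>R (grad y - grad xs)))\<^sup>2 \<le> (1 + \<alpha> * L)\<^sup>2 * (norm (y - xs))\<^sup>2" for y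
  proof -
    have comp: "((y - xs - \<alpha> *\<^sub>R (grad y - grad xs)) $ i)\<^sup>2 \<le> (1 + \<alpha> * L)\<^sup>2 * ((y - xs) $ i)\<^sup>2" for i
    proof -
      have lip: "\<bar>fd i (y $ i) - fd i (xs $ i)\<bar> \<le> L * \<bar>y $ i - xs $ i\<bar>"
      proof (rule lip_deriv[of "fd i" "fdd i"])
        show "\<And>t. (fd i has_real_derivative fdd i t) (at t)" by (rule f_d2)
        show "\<And>t. \<bar>fdd i t\<bar> \<le> L" using m_le L_ge m_pos by (smt (verit))
      qed
      have eq: "(y - xs - \<alpha> *\<^sub>R (grad y - grad xs)) $ i = (y $ i - xs $ i) - \<alpha> * (fd i (y $ i) - fd i (xs $ i))"
        by (simp add: grad_def)
      have "\<bar>(y $ i - xs $ i) - \<alpha> * (fd i (y $ i) - fd i (xs $ i))\<bar> \<le> \<bar>y $ i - xs $ i\<bar> + \<alpha> * (L * \<bar>y $ i - xs $ i\<bar>)"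
      proof -
        have "\<bar>\<alpha> * (fd i (y $ i) - fd i (xs $ i))\<bar> \<le> \<alpha> * (L * \<bar>y $ i - xs $ i\<bar>)"
          using lip \<alpha>_pos by (simp add: abs_mult mult_left_mono)
        then show ?thesis by linarith
      qed
      also have "\<dots> = (1 + \<alpha> * L) * \<bar>y $ i - xs $ i\<bar>" by (simp add: algebra_simps)
      finally have "\<bar>(y - xs - \<alpha> *\<^sub>R (grad y - grad xs)) $ i\<bar> \<le> (1 + \<alpha> * L) * \<bar>(y - xs) $ i\<bar>"
        unfolding eq by simp
      then have "\<bar>(y - xs - \<alpha> *\<^sub>R (grad y - grad xs)) $ i\<bar>\<^sup>2 \<le> ((1 + \<alpha> * L) * \<bar>(y - xs) $ i\<bar>)\<^sup>2"
        by (rule power_mono) simp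
      then show ?thesis by (simp add: power_mult_distrib)
    qed
    have "(norm (y - xs - \<alpha> *\<^sub>R (grad y - grad xs)))\<^sup>2 = (\<Sum>i\<in>UNIV. ((y - xs - \<alpha> *\<^sub>R (grad y - grad xs)) $ i)\<^sup>2)"
      by (rule norm_sq_vec)
    also have "\<dots> \<le> (\<Sum>i\<in>UNIV. (1 + \<alpha> * L)\<^sup>2 * ((y - xs) $ i)\<^sup>2)" by (rule sum_mono) (rule comp)
    also have "\<dots> = (1 + \<alpha> * L)\<^sup>2 * (norm (y - xs))\<^sup>2"
      by (simp only: norm_sq_vec sum_distrib_left)
    finally show ?thesis .
  qed
  have step: "V (Suc t) \<le> G * V t" if tT: "t < T" for t
  proof -
    have gxs: "grad xs = - (transpose A *v ls)" using ls_KKT by (simp add: eq_neg_iff_add_eq_0)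
    have Bx: "B *v x k = B *v d" using xs_B by (simp add: d_def matrix_vector_mult_diff_distrib)
    define a where "a = e t - \<alpha> *\<^sub>R (grad (xin k t) - grad xs)"
    define b where "b = - \<alpha> *\<^sub>R (transpose A *v \<Lambda>)"
    define c where "c = - \<alpha> *\<^sub>R (B *v d)"
    have es: "e (Suc t) = a + b + c"
      unfolding e_def a_def b_def c_def \<Lambda>_def using inner_step[OF tT, of k] Bx gxs
      by (simp add: matrix_vector_mult_diff_distrib algebra_simps)
    have na: "(norm a)\<^sup>2 \<le> (1 + \<alpha> * L)\<^sup>2 * (norm (e t))\<^sup>2"
      using gbound[of "xin k t"] unfolding a_def e_def .
    have nb: "(norm b)\<^sup>2 \<le> \<alpha>\<^sup>2 * (\<rho>A * (norm \<Lambda>)\<^sup>2)"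
      using mult_left_mono[OF Abound[of \<Lambda>], of "\<alpha>\<^sup>2"] unfolding b_def by (simp add: power_mult_distrib)
    have nc: "(norm c)\<^sup>2 \<le> \<alpha>\<^sup>2 * (\<rho>B\<^sup>2 * (norm d)\<^sup>2)"
      using mult_left_mono[OF Bbound[of d], of "\<alpha>\<^sup>2"] unfolding c_def by (simp add: power_mult_distrib)
    define P where "P = pb * qb / (pb - 1)"
    define Q where "Q = pb * qb / ((pb - 1) * (qb - 1))"
    have P0: "0 \<le> P" and Q0: "0 \<le> Q" using pb_gt qb_gt unfolding P_def Q_def by auto
    have "(norm (e (Suc t)))\<^sup>2 \<le> pb * (norm a)\<^sup>2 + P * (norm b)\<^sup>2 + Q * (norm c)\<^sup>2"
      unfolding es P_def Q_def by (rule three_sq[OF pb_gt qb_gt])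
    also have "\<dots> \<le> pb * ((1 + \<alpha> * L)\<^sup>2 * (norm (e t))\<^sup>2) + P * (\<alpha>\<^sup>2 * (\<rho>A * (norm \<Lambda>)\<^sup>2))
                    + Q * (\<alpha>\<^sup>2 * (\<rho>B\<^sup>2 * (norm d)\<^sup>2))"
    proof -
      have "0 \<le> pb" using pb_gt by simp
      then show ?thesis using mult_left_mono[OF na] mult_left_mono[OF nb P0] mult_left_mono[OF nc Q0]
        by (meson add_mono)
    qed
    finally have E: "(norm (e (Suc t)))\<^sup>2 \<le> pb * (1 + \<alpha> * L)\<^sup>2 * (norm (e t))\<^sup>2 + P * \<alpha>\<^sup>2 * \<rho>A * (norm \<Lambda>)\<^sup>2
                    + Q * \<alpha>\<^sup>2 * \<rho>B\<^sup>2 * (norm d)\<^sup>2" by (simp only: mult.assoc)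
    have T1: "pb * (1 + \<alpha> * L)\<^sup>2 * (norm (e t))\<^sup>2 \<le> G * (norm (e t))\<^sup>2"
      using mult_right_mono[OF G1 zero_le_power2] .
    have T2: "\<alpha> / \<beta> * (norm \<Lambda>)\<^sup>2 + P * \<alpha>\<^sup>2 * \<rho>A * (norm \<Lambda>)\<^sup>2 \<le> G * (\<alpha> / \<beta> * (norm \<Lambda>)\<^sup>2)"
    proof -
      have "\<alpha> / \<beta> * (norm \<Lambda>)\<^sup>2 + P * \<alpha>\<^sup>2 * \<rho>A * (norm \<Lambda>)\<^sup>2
            = (1 + pb * qb * \<alpha> * \<beta> * \<rho>A / (pb - 1)) * (\<alpha> / \<beta> * (norm \<Lambda>)\<^sup>2)"
        using \<beta>_pos pb_gt unfolding P_def by (simp add: field_simps power2_eq_square)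
      also have "\<dots> \<le> G * (\<alpha> / \<beta> * (norm \<Lambda>)\<^sup>2)"
        using G2 \<alpha>_pos \<beta>_pos by (intro mult_right_mono) auto
      finally show ?thesis .
    qed
    have T3: "\<alpha> * \<rho>B * (norm d)\<^sup>2 + Q * \<alpha>\<^sup>2 * \<rho>B\<^sup>2 * (norm d)\<^sup>2 \<le> G * (\<alpha> * \<rho>B * (norm d)\<^sup>2)"
    proof -
      have "\<alpha> * \<rho>B * (norm d)\<^sup>2 + Q * \<alpha>\<^sup>2 * \<rho>B\<^sup>2 * (norm d)\<^sup>2
            = (1 + pb * qb * \<alpha> * \<rho>B / ((pb - 1) * (qb - 1))) * (\<alpha> * \<rho>B * (norm d)\<^sup>2)"
        using pb_gt qb_gt unfolding Q_def by (simp add: field_simps power2_eq_square)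
      also have "\<dots> \<le> G * (\<alpha> * \<rho>B * (norm d)\<^sup>2)"
        using G3 \<alpha>_pos rB0 by (intro mult_right_mono) auto
      finally show ?thesis .
    qed
    have "V (Suc t) \<le> G * (norm (e t))\<^sup>2 + G * (\<alpha> / \<beta> * (norm \<Lambda>)\<^sup>2) + G * (\<alpha> * \<rho>B * (norm d)\<^sup>2)"
      unfolding V_def using E T1 T2 T3 by linarith
    then show ?thesis unfolding V_def by (simp add: algebra_simps)
  qed
  have iter: "t \<le> T - 1 \<Longrightarrow> V t \<le> G ^ t * V 0" for t
  proof (induction t)
    case 0 then show ?case by simp
  next
    case (Suc t)
    then have "t < T" by simp
    have "V (Suc t) \<le> G * V t" by (rule step[OF \<open>t < T\<close>])
    also have "\<dots> \<le> G * (G ^ t * V 0)" using Suc G0 by (intro mult_left_mono) auto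
    finally show ?case by simp
  qed
  have V0: "V 0 = c1 * (norm d)\<^sup>2 + \<alpha> / \<beta> * (norm \<Lambda>)\<^sup>2"
    unfolding V_def e_def c1_def d_def using inner0[of k] by (simp add: algebra_simps)
  have "V (T - 1) \<le> G ^ (T - 1) * V 0" by (rule iter) simp
  then show ?thesis
    unfolding Let_def V0 using G_def c1_def \<rho>B_def \<rho>A_def
    by (simp add: V_def e_def d_def \<Lambda>_def)
qed

end
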